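(* Let $n\ge 2$ and let $D,D'\subseteq\Phi^+$ be rook placements. If $\Omega_D\subseteq\overline{\Omega_{D'}}$ (Zariski closure), then $\sigma_D\le_B\sigma_{D'}$, where $\le_B$ is the Bruhat–Chevalley order on the symmetric group $S_{2n-2}$.
   Context: Let $B\subseteq \mathrm{GL}_n(\mathbb{C})$ be the group of invertible upper-triangular matrices. Let $\mathfrak{n}$ be the Lie algebra of strictly upper-triangular $n\times n$ matrices; identify $\mathfrak{n}^*$ with the strictly lower-triangular matrices via $\langle\lambda,x\rangle=\mathrm{tr}(\lambda x)$, so that $b.\lambda=(b\lambda b^{-1})_{\mathrm{low}}$ ($X_{\mathrm{low}}$ = strictly lower-triangular part). Let $e_{i,j}$ be the elementary matrix units. Let $\Phi^+=\{(i,j)\in\mathbb{Z}^2:1\le j<i\le n\}$, with rows $\mathcal{R}_k=\{(k,s)\in\Phi^+\}$ and columns $\mathcal{C}_k=\{(r,k)\in\Phi^+\}$. A rook placement is a subset $D\subseteq\Phi^+$ with $|D\cap\mathcal{R}_k|\le 1$ and $|D\cap\mathcal{C}_k|\le1$ for all $k$. Put $f_D=\sum_{(i,j)\in D}e_{i,j}$ and $\Omega_D=B.f_D$. For a rook placement $D=\{(i_1,j_1),\dots,(i_s,j_s)\}$, the involution $\sigma_D\in S_{2n-2}$ is the product of the (pairwise disjoint) transpositions $(2i_r-2,\,2j_r-1)$, $1\le r\le s$. *)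

theory Defs
  imports Complex_Main
begin

text \<open>Matrices are functions nat => nat => complex; only indices in {1..n} matter.\<close>

type_synonym cmat = "nat \<Rightarrow> nat \<Rightarrow> complex"

definition mmul :: "nat \<Rightarrow> cmat \<Rightarrow> cmat \<Rightarrow> cmat" where
  "mmul n A C = (\<lambda>i j. \<Sum>k=1..n. A i k * C k j)"

definition is_inverse :: "nat \<Rightarrow> cmat \<Rightarrow> cmat \<Rightarrow> bool" where
  "is_inverse n b c \<longleftrightarrow>
     (\<forall>i\<in>{1..n}. \<forall>j\<in>{1..n}.
        mmul n b c i j = (if i = j then 1 else 0) \<and> mmul n c b i j = (if i = j then 1 else 0))"

definition borel :: "nat \<Rightarrow> cmat set" where
  "borel n = {b. (\<forall>i j. 1 \<le> j \<and> j < i \<and> i \<le> n \<longrightarrow> b i j = 0) \<and> (\<exists>c. is_inverse n b c)}"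

definition minv :: "nat \<Rightarrow> cmat \<Rightarrow> cmat" where
  "minv n b = (SOME c. is_inverse n b c)"

definition low :: "nat \<Rightarrow> cmat \<Rightarrow> cmat" where
  "low n X = (\<lambda>i j. if 1 \<le> j \<and> j < i \<and> i \<le> n then X i j else 0)"

definition bact :: "nat \<Rightarrow> cmat \<Rightarrow> cmat \<Rightarrow> cmat" where
  "bact n b L = low n (mmul n (mmul n b L) (minv n b))"

definition posroots :: "nat \<Rightarrow> (nat \<times> nat) set" where
  "posroots n = {(i, j). 1 \<le> j \<and> j < i \<and> i \<le> n}"

definition rook_placement :: "nat \<Rightarrow> (nat \<times> nat) set \<Rightarrow> bool" where
  "rook_placement n D \<longleftrightarrow> D \<subseteq> posroots n \<and>
     (\<forall>k. card {s. (k, s) \<in> D} \<le> 1) \<and> (\<forall>k. card {r. (r, k) \<in> D} \<le> 1)"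

definition fD :: "nat \<Rightarrow> (nat \<times> nat) set \<Rightarrow> cmat" where
  "fD n D = (\<lambda>i j. if (i, j) \<in> D then 1 else 0)"

definition orbit :: "nat \<Rightarrow> (nat \<times> nat) set \<Rightarrow> cmat set" where
  "orbit n D = (\<lambda>b. bact n b (fD n D)) ` borel n"

inductive_set polyfun :: "(cmat \<Rightarrow> complex) set" where
  const: "(\<lambda>x. c) \<in> polyfun"
| coord: "(\<lambda>x. x i j) \<in> polyfun"
| add: "p \<in> polyfun \<Longrightarrow> q \<in> polyfun \<Longrightarrow> (\<lambda>x. p x + q x) \<in> polyfun"
| mult: "p \<in> polyfun \<Longrightarrow> q \<in> polyfun \<Longrightarrow> (\<lambda>x. p x * q x) \<in> polyfun"

definition zariski_closure :: "cmat set \<Rightarrow> cmat set" where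
  "zariski_closure S = {x. \<forall>p\<in>polyfun. (\<forall>s\<in>S. p s = 0) \<longrightarrow> p x = 0}"

text \<open>The involution sigma_D: product of transpositions (2i-2, 2j-1) for (i,j) in D.\<close>
definition sigmaD :: "(nat \<times> nat) set \<Rightarrow> nat \<Rightarrow> nat" where
  "sigmaD D x =
     (if \<exists>(i, j)\<in>D. x = 2*i - 2 then (THE y. \<exists>(i, j)\<in>D. x = 2*i - 2 \<and> y = 2*j - 1)
      else if \<exists>(i, j)\<in>D. x = 2*j - 1 then (THE y. \<exists>(i, j)\<in>D. x = 2*j - 1 \<and> y = 2*i - 2)
      else x)"

text \<open>Bruhat order on permutations of {1..m} (as functions nat => nat fixing everything else).\<close>
definition transp :: "nat \<Rightarrow> nat \<Rightarrow> nat \<Rightarrow> nat" where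
  "transp a b x = (if x = a then b else if x = b then a else x)"

definition inv_count :: "nat \<Rightarrow> (nat \<Rightarrow> nat) \<Rightarrow> nat" where
  "inv_count m w = card {(a, b). 1 \<le> a \<and> a < b \<and> b \<le> m \<and> w a > w b}"

definition bruhat_step :: "nat \<Rightarrow> (nat \<Rightarrow> nat) \<Rightarrow> (nat \<Rightarrow> nat) \<Rightarrow> bool" where
  "bruhat_step m u w \<longleftrightarrow>
     (\<exists>a b. 1 \<le> a \<and> a < b \<and> b \<le> m \<and> w = u \<circ> transp a b \<and> inv_count m u < inv_count m w)"

definition bruhat_le :: "nat \<Rightarrow> (nat \<Rightarrow> nat) \<Rightarrow> (nat \<Rightarrow> nat) \<Rightarrow> bool" where
  "bruhat_le m = (bruhat_step m)\<^sup>*\<^sup>*"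

end

theory Submission
  imports Defs "Jordan_Normal_Form.Determinant"
begin

fun rk :: "(nat \<Rightarrow> nat) \<Rightarrow> nat \<Rightarrow> nat \<Rightarrow> nat" where
  "rk u 0 q = 0"
| "rk u (Suc p) q = rk u p q + (if q \<le> u (Suc p) then 1 else 0)"

fun cnt :: "(nat \<Rightarrow> nat) \<Rightarrow> nat \<Rightarrow> nat \<Rightarrow> nat \<Rightarrow> nat" where
  "cnt u 0 lo hi = 0"
| "cnt u (Suc p) lo hi = cnt u p lo hi + (if lo \<le> u (Suc p) \<and> u (Suc p) \<le> hi then 1 else 0)"

lemma rk_cong: "(\<And>k. 1 \<le> k \<Longrightarrow> k \<le> p \<Longrightarrow> u k = w k) \<Longrightarrow> rk u p q = rk w p q"
  by (induction p) auto

lemma cnt_cong: "(\<And>k. 1 \<le> k \<Longrightarrow> k \<le> p \<Longrightarrow> u k = w k) \<Longrightarrow> cnt u p lo hi = cnt w p lo hi"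
  by (induction p) auto

lemma rk_split: "q \<le> Suc h \<Longrightarrow> rk u p q = rk u p (Suc h) + cnt u p q h"
  by (induction p) auto

lemma cnt_mono: "p \<le> p' \<Longrightarrow> cnt u p lo hi \<le> cnt u p' lo hi"
proof (induction p' )
  case 0 then show ?case by simp
next
  case (Suc p') then show ?case by (cases "p = Suc p'") auto
qed

lemma rk_transp:
  assumes "1 \<le> a" "a < b"
  shows "rk (u \<circ> Defs.transp a b) p q 
     + (if a \<le> p \<and> p < b \<and> u b < q \<and> q \<le> u a then 1 else 0) = rk u p q
     + (if a \<le> p \<and> p < b \<and> u a < q \<and> q \<le> u b then 1 else 0)"
proof (induction p)
  case 0 then show ?case using assms by simp
next
  case (Suc p)
  show ?case
  proof (cases "Suc p = a")
    case True
    then have "p < a" by simp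
    then have "rk (u \<circ> Defs.transp a b) p q = rk u p q" using Suc by (simp add: comp_def)
    then show ?thesis using True assms by (auto simp: Defs.transp_def comp_def)
  next
    case F1: False
    show ?thesis
    proof (cases "Suc p = b")
      case True
      then show ?thesis using Suc assms F1 by (auto simp: Defs.transp_def comp_def)
    next
      case False
      then show ?thesis using Suc assms F1 by (auto simp: Defs.transp_def comp_def)
    qed
  qed
qed

lemma rk_transp_lt:
  assumes "1 \<le> a" "a < b" "u a < u b"
  shows "rk (u \<circ> Defs.transp a b) p q = rk u p q
     + (if a \<le> p \<and> p < b \<and> u a < q \<and> q \<le> u b then 1 else 0)"
  using rk_transp[OF assms(1,2), of u p q] assms(3) by auto


lemma inv_count_transp:
  assumes "1 \<le> a" "a < b" "b \<le> m" "u a < u b"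
  shows "inv_count m u < inv_count m (u \<circ> Defs.transp a b)"
proof -
  define v where "v = u \<circ> Defs.transp a b"
  define I where "I = (\<lambda>w::nat\<Rightarrow>nat. {(x, y). 1 \<le> x \<and> x < y \<and> y \<le> m \<and> w x > w y})"
  define g where "g = (\<lambda>(x::nat, y::nat). if x < a \<or> b < y then (Defs.transp a b x, Defs.transp a b y) else (x, y))"
  have fin: "finite (I w)" for w
    by (rule finite_subset[of _ "{1..m} \<times> {1..m}"]) (auto simp: I_def)
  have ab: "(a, b) \<in> I v" using assms by (auto simp: I_def v_def Defs.transp_def)
  have sub: "g ` I u \<subseteq> I v - {(a, b)}"
  proof
    fix z assume "z \<in> g ` I u"
    then obtain x y where xy: "(x, y) \<in> I u" "z = g (x, y)" by auto
    then show "z \<in> I v - {(a, b)}"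
      using assms by (auto simp: I_def v_def g_def Defs.transp_def split: if_splits)
  qed
  have inj: "inj_on g (I u)"
    unfolding inj_on_def I_def g_def using assms
    by (auto simp: Defs.transp_def split: if_splits)
  have "card (I u) = card (g ` I u)" using card_image[OF inj] by simp
  also have "\<dots> \<le> card (I v - {(a, b)})" by (rule card_mono) (use fin sub in auto)
  also have "\<dots> < card (I v)" by (rule card_Diff1_less[OF fin ab])
  finally show ?thesis unfolding inv_count_def I_def v_def by simp
qed


definition permm :: "nat \<Rightarrow> (nat \<Rightarrow> nat) \<Rightarrow> bool" where
  "permm m u \<longleftrightarrow> bij u \<and> (\<forall>x. x < 1 \<or> m < x \<longrightarrow> u x = x)"

lemma permm_range: assumes "permm m u" "1 \<le> x" "x \<le> m" shows "1 \<le> u x \<and> u x \<le> m"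
proof (rule ccontr)
  assume "\<not> (1 \<le> u x \<and> u x \<le> m)"
  then have "u (u x) = u x" using assms(1) unfolding permm_def by (metis less_one not_le)
  then have "u x = x" using assms(1) unfolding permm_def bij_def inj_def by blast
  then show False using assms \<open>\<not> (1 \<le> u x \<and> u x \<le> m)\<close> by simp
qed

lemma bij_transp: "bij (Defs.transp a b)"
proof -
  have "Defs.transp a b \<circ> Defs.transp a b = id" by (auto simp: Defs.transp_def)
  then show ?thesis using o_bij by blast
qed

lemma cnt_const: "p0 \<le> p \<Longrightarrow> (\<And>k. p0 < k \<Longrightarrow> k \<le> p \<Longrightarrow> \<not> (lo \<le> u k \<and> u k \<le> hi))
   \<Longrightarrow> cnt u p lo hi = cnt u p0 lo hi"
proof (induction p)
  case 0 then show ?case by simp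
next
  case (Suc p) then show ?case by (cases "p0 = Suc p") auto
qed

lemma bruhat_crit:
  assumes "permm m u" "permm m w" "\<forall>p q. rk u p q \<le> rk w p q"
  shows "bruhat_le m u w"
  using assms
proof (induction "\<Sum>(p, q)\<in>{..m} \<times> {..Suc m}. rk w p q - rk u p q" arbitrary: u rule: less_induct)
  case less
  note pu = less.prems(1) and pw = less.prems(2) and hyp = less.prems(3)
  show ?case
  proof (cases "u = w")
    case True then show ?thesis unfolding bruhat_le_def by simp
  next
    case False
    then obtain x where "u x \<noteq> w x" by auto
    define a where "a = (LEAST x. u x \<noteq> w x)"
    have ua: "u a \<noteq> w a" unfolding a_def by (rule LeastI) fact
    have before: "\<And>k. k < a \<Longrightarrow> u k = w k" unfolding a_def using not_less_Least by blast
    have a1: "1 \<le> a" "a \<le> m"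
      using ua pu pw unfolding permm_def by (metis not_le)+
    obtain a0 where a0: "a = Suc a0" using a1 by (cases a) auto
    have rc: "rk u a0 q = rk w a0 q" for q by (rule rk_cong) (use before a0 in auto)
    have cc: "cnt u a0 lo hi = cnt w a0 lo hi" for lo hi by (rule cnt_cong) (use before a0 in auto)
    have ualt: "u a < w a"
    proof (rule ccontr)
      assume "\<not> u a < w a"
      then have "w a < u a" using ua by simp
      then have "rk u a (u a) = rk u a0 (u a) + 1" "rk w a (u a) = rk w a0 (u a)"
        using a0 by auto
      then show False using hyp rc[of "u a"] by (metis add_le_same_cancel1 not_one_le_zero)
    qed
    have wr: "1 \<le> w a \<and> w a \<le> m" using permm_range[OF pw a1] .
    obtain b' where b': "u b' = w a" using pu unfolding permm_def bij_def surj_def by metis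
    have b'r: "1 \<le> b' \<and> b' \<le> m"
    proof (rule ccontr)
      assume nb: "\<not> (1 \<le> b' \<and> b' \<le> m)"
      then have "u b' = b'" using pu unfolding permm_def by (metis less_one not_le)
      then show False using b' wr nb by simp
    qed
    have "b' \<noteq> a" using b' ua by auto
    moreover have "\<not> b' < a"
    proof
      assume "b' < a"
      then have "w b' = w a" using before b' by simp
      then have "b' = a" using pw unfolding permm_def bij_def inj_def by blast
      then show False using \<open>b' < a\<close> by simp
    qed
    ultimately have "a < b'" by simp
    define P where "P = (\<lambda>k. a < k \<and> u a < u k \<and> u k \<le> w a)"
    have Pb': "P b'" using \<open>a < b'\<close> b' ualt unfolding P_def by simp
    define b where "b = (LEAST k. P k)"
    have Pb: "P b" unfolding b_def by (rule LeastI) fact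
    have bb': "b \<le> b'" unfolding b_def by (rule Least_le) fact
    have between: "\<And>k. a < k \<Longrightarrow> k < b \<Longrightarrow> \<not> (u a < u k \<and> u k \<le> w a)"
      using not_less_Least[of _ P] unfolding b_def[symmetric] unfolding P_def by blast
    have ab: "a < b" "b \<le> m" "u a < u b" "u b \<le> w a" using Pb bb' b'r unfolding P_def by auto
    define v where "v = u \<circ> Defs.transp a b"
    have rv: "rk v p q = rk u p q + (if a \<le> p \<and> p < b \<and> u a < q \<and> q \<le> u b then 1 else 0)" for p q
      unfolding v_def by (rule rk_transp_lt) (use a1 ab in auto)
    have key: "rk u p q < rk w p q" if "a \<le> p" "p < b" "u a < q" "q \<le> u b" for p q
    proof -
      define h where "h = w a"
      have qh: "q \<le> Suc h" using that ab unfolding h_def by simp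
      have e1: "rk u p q = rk u p (Suc h) + cnt u p q h" by (rule rk_split[OF qh])
      have e2: "rk w p q = rk w p (Suc h) + cnt w p q h" by (rule rk_split[OF qh])
      have e3: "cnt u p q h = cnt u a0 q h"
      proof (rule cnt_const)
        show "a0 \<le> p" using that a0 by simp
        fix k assume "a0 < k" "k \<le> p"
        then have "k = a \<or> (a < k \<and> k < b)" using a0 that by auto
        then show "\<not> (q \<le> u k \<and> u k \<le> h)"
          using between that unfolding h_def by fastforce
      qed
      have e4: "cnt w a q h = cnt w a0 q h + 1" using a0 that ab unfolding h_def by simp
      have e5: "cnt w a q h \<le> cnt w p q h" by (rule cnt_mono) fact
      have e6: "rk u p (Suc h) \<le> rk w p (Suc h)" using hyp by simp
      show ?thesis using e1 e2 e3 e4 e5 e6 cc[of q h] by linarith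
    qed
    have vle: "rk v p q \<le> rk w p q" for p q
      using rv[of p q] key[of p q] hyp by (auto split: if_splits simp: Suc_le_eq)
    have vge: "rk u p q \<le> rk v p q" for p q using rv[of p q] by simp
    have vgt: "rk u a (u b) < rk v a (u b)" using rv[of a "u b"] ab by simp
    have ubm: "u b \<le> m" using permm_range[OF pu, of b] ab a1 by simp
    have lt: "(\<Sum>(p, q)\<in>{..m} \<times> {..Suc m}. rk w p q - rk v p q)
           < (\<Sum>(p, q)\<in>{..m} \<times> {..Suc m}. rk w p q - rk u p q)"
    proof (rule sum_strict_mono_ex1)
      show "finite ({..m} \<times> {..Suc m})" by simp
      show "\<forall>x\<in>{..m} \<times> {..Suc m}. (case x of (p, q) \<Rightarrow> rk w p q - rk v p q)
             \<le> (case x of (p, q) \<Rightarrow> rk w p q - rk u p q)"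
        using vge by (auto intro: diff_le_mono2)
      show "\<exists>x\<in>{..m} \<times> {..Suc m}. (case x of (p, q) \<Rightarrow> rk w p q - rk v p q)
             < (case x of (p, q) \<Rightarrow> rk w p q - rk u p q)"
        using vgt vle[of a "u b"] a1 ubm by (intro bexI[of _ "(a, u b)"]) auto
    qed
    have pv: "permm m v"
      unfolding permm_def v_def
    proof
      show "bij (u \<circ> Defs.transp a b)" using pu bij_transp unfolding permm_def by (blast intro: bij_comp)
      show "\<forall>x. x < 1 \<or> m < x \<longrightarrow> (u \<circ> Defs.transp a b) x = x"
        using pu a1 ab unfolding permm_def by (auto simp: Defs.transp_def)
    qed
    have step: "bruhat_step m u v"
      unfolding bruhat_step_def v_def
      using a1 ab inv_count_transp[of a b m u] by auto
    have "bruhat_le m v w" using less.hyps[OF lt pv pw] vle by blast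
    then show ?thesis using step unfolding bruhat_le_def
      by (meson converse_rtranclp_into_rtranclp)
  qed
qed


lemma posroots_finite: "finite (posroots n)"
  by (rule finite_subset[of _ "{1..n} \<times> {1..n}"]) (auto simp: posroots_def)

lemma rook_finite: "rook_placement n D \<Longrightarrow> finite D"
  unfolding rook_placement_def using posroots_finite finite_subset by blast

lemma rook_row: assumes "rook_placement n D" "(k, s1) \<in> D" "(k, s2) \<in> D" shows "s1 = s2"
proof -
  have f: "finite {s. (k, s) \<in> D}"
  proof (rule finite_subset[of _ "snd ` D"])
    show "{s. (k, s) \<in> D} \<subseteq> snd ` D" by force
    show "finite (snd ` D)" using rook_finite[OF assms(1)] by simp
  qed
  have "card {s. (k, s) \<in> D} \<le> Suc 0" using assms(1) unfolding rook_placement_def by simp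
  then show ?thesis using card_le_Suc0_iff_eq[OF f] assms(2,3) by blast
qed

lemma rook_col: assumes "rook_placement n D" "(r1, k) \<in> D" "(r2, k) \<in> D" shows "r1 = r2"
proof -
  have f: "finite {r. (r, k) \<in> D}"
  proof (rule finite_subset[of _ "fst ` D"])
    show "{r. (r, k) \<in> D} \<subseteq> fst ` D" by force
    show "finite (fst ` D)" using rook_finite[OF assms(1)] by simp
  qed
  have "card {r. (r, k) \<in> D} \<le> Suc 0" using assms(1) unfolding rook_placement_def by simp
  then show ?thesis using card_le_Suc0_iff_eq[OF f] assms(2,3) by blast
qed

lemma rook_subset: assumes "rook_placement n D" "E \<subseteq> D" shows "rook_placement n E"
proof -
  have fD: "finite D" by (rule rook_finite[OF assms(1)])
  have "card {s. (k, s) \<in> E} \<le> card {s. (k, s) \<in> D}" for k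
  proof (rule card_mono)
    show "finite {s. (k, s) \<in> D}" by (rule finite_subset[of _ "snd ` D"]) (force, use fD in simp)
    show "{s. (k, s) \<in> E} \<subseteq> {s. (k, s) \<in> D}" using assms(2) by auto
  qed
  moreover have "card {r. (r, k) \<in> E} \<le> card {r. (r, k) \<in> D}" for k
  proof (rule card_mono)
    show "finite {r. (r, k) \<in> D}" by (rule finite_subset[of _ "fst ` D"]) (force, use fD in simp)
    show "{r. (r, k) \<in> E} \<subseteq> {r. (r, k) \<in> D}" using assms(2) by auto
  qed
  ultimately show ?thesis using assms unfolding rook_placement_def by (meson order_trans subset_trans)
qed

lemma rook_pos: "rook_placement n D \<Longrightarrow> (i, j) \<in> D \<Longrightarrow> 1 \<le> j \<and> j < i \<and> i \<le> n"
  unfolding rook_placement_def posroots_def by auto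

lemma sigma_hi: assumes R: "rook_placement n D" and ij: "(i, j) \<in> D"
  shows "sigmaD D (2*i - 2) = 2*j - 1"
proof -
  have c: "\<exists>(i', j')\<in>D. 2*i - 2 = 2*i' - 2" using ij by auto
  have "(THE y. \<exists>(i', j')\<in>D. 2*i - 2 = 2*i' - 2 \<and> y = 2*j' - 1) = 2*j - 1"
  proof (rule the_equality)
    show "\<exists>(i', j')\<in>D. 2*i - 2 = 2*i' - 2 \<and> 2*j - 1 = 2*j' - 1" using ij by auto
    fix y assume "\<exists>(i', j')\<in>D. 2*i - 2 = 2*i' - 2 \<and> y = 2*j' - 1"
    then obtain i' j' where h: "(i', j') \<in> D" "2*i - 2 = 2*i' - 2" "y = 2*j' - 1" by auto
    have "i' = i" using h rook_pos[OF R h(1)] rook_pos[OF R ij] by arith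
    then have "j' = j" using rook_row[OF R] h(1) ij by blast
    then show "y = 2*j - 1" using h by simp
  qed
  then show ?thesis using c unfolding sigmaD_def by simp
qed

lemma sigma_lo: assumes R: "rook_placement n D" and ij: "(i, j) \<in> D"
  shows "sigmaD D (2*j - 1) = 2*i - 2"
proof -
  have nc: "\<not> (\<exists>(i', j')\<in>D. 2*j - 1 = 2*i' - 2)"
  proof
    assume "\<exists>(i', j')\<in>D. 2*j - 1 = 2*i' - 2"
    then obtain i' j' where h: "(i', j') \<in> D" "2*j - 1 = 2*i' - 2" by auto
    then show False using rook_pos[OF R h(1)] rook_pos[OF R ij] by presburger
  qed
  have c: "\<exists>(i', j')\<in>D. 2*j - 1 = 2*j' - 1" using ij by auto
  have "(THE y. \<exists>(i', j')\<in>D. 2*j - 1 = 2*j' - 1 \<and> y = 2*i' - 2) = 2*i - 2"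
  proof (rule the_equality)
    show "\<exists>(i', j')\<in>D. 2*j - 1 = 2*j' - 1 \<and> 2*i - 2 = 2*i' - 2" using ij by auto
    fix y assume "\<exists>(i', j')\<in>D. 2*j - 1 = 2*j' - 1 \<and> y = 2*i' - 2"
    then obtain i' j' where h: "(i', j') \<in> D" "2*j - 1 = 2*j' - 1" "y = 2*i' - 2" by auto
    have "j' = j" using h rook_pos[OF R h(1)] rook_pos[OF R ij] by simp
    then have "i' = i" using rook_col[OF R] h(1) ij by blast
    then show "y = 2*i - 2" using h by simp
  qed
  then show ?thesis using c nc unfolding sigmaD_def by simp
qed

lemma sigma_fix: assumes "\<forall>(i, j)\<in>D. x \<noteq> 2*i - 2 \<and> x \<noteq> 2*j - 1"
  shows "sigmaD D x = x"
  using assms unfolding sigmaD_def by auto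

lemma sigma_insert:
  assumes R: "rook_placement n (insert (i, j) D)" and nin: "(i, j) \<notin> D"
  shows "sigmaD (insert (i, j) D) = sigmaD D \<circ> Defs.transp (2*j - 1) (2*i - 2)"
proof
  fix x
  have RD: "rook_placement n D" by (rule rook_subset[OF R]) auto
  have pij: "1 \<le> j \<and> j < i \<and> i \<le> n" using rook_pos[OF R, of i j] by simp
  have posD: "\<And>a b. (a, b) \<in> D \<Longrightarrow> 1 \<le> b \<and> b < a \<and> a \<le> n" using rook_pos[OF RD] by blast
  have rowD: "\<And>b. (i, b) \<notin> D"
    using rook_row[OF R, of i j] nin by blast
  have colD: "\<And>a. (a, j) \<notin> D"
    using rook_col[OF R, of _ j i] nin by blast
  have lofix: "sigmaD D (2*j - 1) = 2*j - 1"
  proof (rule sigma_fix, safe)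
    fix a b assume ab: "(a, b) \<in> D"
    show "2*j - 1 = 2*a - 2 \<Longrightarrow> False" using posD[OF ab] pij by presburger
    assume "2*j - 1 = 2*b - 1"
    then have "b = j" using posD[OF ab] pij by simp
    then show False using colD[of a] ab by simp
  qed
  have hifix: "sigmaD D (2*i - 2) = 2*i - 2"
  proof (rule sigma_fix, safe)
    fix a b assume ab: "(a, b) \<in> D"
    show "2*i - 2 = 2*b - 1 \<Longrightarrow> False" using posD[OF ab] pij by presburger
    assume "2*i - 2 = 2*a - 2"
    then have "a = i" using posD[OF ab] pij by arith
    then show False using rowD[of b] ab by simp
  qed
  show "sigmaD (insert (i, j) D) x = (sigmaD D \<circ> Defs.transp (2*j - 1) (2*i - 2)) x"
  proof (cases "x = 2*i - 2")
    case True
    then show ?thesis using sigma_hi[OF R, of i j] lofix by (simp add: Defs.transp_def)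
  next
    case F1: False
    show ?thesis
    proof (cases "x = 2*j - 1")
      case True
      then show ?thesis using sigma_lo[OF R, of i j] hifix F1 by (simp add: Defs.transp_def)
    next
      case F2: False
      have tx: "Defs.transp (2*j - 1) (2*i - 2) x = x" using F1 F2 by (simp add: Defs.transp_def)
      show ?thesis
      proof (cases "\<exists>(a, b)\<in>D. x = 2*a - 2")
        case True
        then obtain a b where ab: "(a, b) \<in> D" "x = 2*a - 2" by auto
        then show ?thesis using sigma_hi[OF R, of a b] sigma_hi[OF RD, of a b] tx by simp
      next
        case F3: False
        show ?thesis
        proof (cases "\<exists>(a, b)\<in>D. x = 2*b - 1")
          case True
          then obtain a b where ab: "(a, b) \<in> D" "x = 2*b - 1" by auto
          then show ?thesis using sigma_lo[OF R, of a b] sigma_lo[OF RD, of a b] tx by simp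
        next
          case False
          have "sigmaD (insert (i, j) D) x = x" by (rule sigma_fix) (use F1 F2 F3 False in auto)
          moreover have "sigmaD D x = x" by (rule sigma_fix) (use F3 False in auto)
          ultimately show ?thesis using tx by simp
        qed
      qed
    qed
  qed
qed


definition swc :: "(nat \<times> nat) set \<Rightarrow> nat \<Rightarrow> nat \<Rightarrow> nat" where
  "swc D p q = card {(a, b) \<in> D. 2*b - 1 \<le> p \<and> p < 2*a - 2 \<and> 2*b - 1 < q \<and> q \<le> 2*a - 2}"

lemma rk_sigma: "rook_placement n D \<Longrightarrow> rk (sigmaD D) p q = rk id p q + swc D p q"
proof -
  assume R: "rook_placement n D"
  have "finite D" by (rule rook_finite[OF R])
  then show ?thesis using R
  proof (induction D rule: finite_induct)
    case empty
    have "sigmaD {} = id" by (auto simp: sigmaD_def)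
    then show ?case by (simp add: swc_def)
  next
    case (insert e D)
    obtain i j where e: "e = (i, j)" by (cases e)
    have RD: "rook_placement n D" by (rule rook_subset[OF insert.prems]) auto
    have pij: "1 \<le> j \<and> j < i \<and> i \<le> n" using rook_pos[OF insert.prems, of i j] e by simp
    have posD: "\<And>a b. (a, b) \<in> D \<Longrightarrow> 1 \<le> b \<and> b < a \<and> a \<le> n" using rook_pos[OF RD] by blast
    have nin: "(i, j) \<notin> D" using insert.hyps e by simp
    have rowD: "\<And>b. (i, b) \<notin> D"
      using rook_row[OF insert.prems[unfolded e], of i j] nin by blast
    have colD: "\<And>a. (a, j) \<notin> D"
      using rook_col[OF insert.prems[unfolded e], of _ j i] nin by blast
    have lofix: "sigmaD D (2*j - 1) = 2*j - 1"
    proof (rule sigma_fix, safe)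
      fix a b assume ab: "(a, b) \<in> D"
      show "2*j - 1 = 2*a - 2 \<Longrightarrow> False" using posD[OF ab] pij by presburger
      assume "2*j - 1 = 2*b - 1"
      then have "b = j" using posD[OF ab] pij by simp
      then show False using colD[of a] ab by simp
    qed
    have hifix: "sigmaD D (2*i - 2) = 2*i - 2"
    proof (rule sigma_fix, safe)
      fix a b assume ab: "(a, b) \<in> D"
      show "2*i - 2 = 2*b - 1 \<Longrightarrow> False" using posD[OF ab] pij by presburger
      assume "2*i - 2 = 2*a - 2"
      then have "a = i" using posD[OF ab] pij by arith
      then show False using rowD[of b] ab by simp
    qed
    have si: "sigmaD (insert e D) = sigmaD D \<circ> Defs.transp (2*j - 1) (2*i - 2)"
      unfolding e by (rule sigma_insert[OF insert.prems[unfolded e] nin])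
    have lt: "1 \<le> 2*j - 1" "2*j - 1 < 2*i - 2" using pij by arith+
    have r1: "rk (sigmaD (insert e D)) p q = rk (sigmaD D) p q +
       (if 2*j - 1 \<le> p \<and> p < 2*i - 2 \<and> 2*j - 1 < q \<and> q \<le> 2*i - 2 then 1 else 0)"
      unfolding si by (rule rk_transp_lt[OF lt, of "sigmaD D", unfolded lofix hifix]) (use lt in simp)
    define S where "S = {(a, b) \<in> D. 2*b - 1 \<le> p \<and> p < 2*a - 2 \<and> 2*b - 1 < q \<and> q \<le> 2*a - 2}"
    have fS: "finite S" using insert.hyps(1) unfolding S_def by (rule finite_subset[rotated]) auto
    have nS: "(i, j) \<notin> S" using nin unfolding S_def by auto
    have "{(a, b) \<in> insert e D. 2*b - 1 \<le> p \<and> p < 2*a - 2 \<and> 2*b - 1 < q \<and> q \<le> 2*a - 2}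
      = (if 2*j - 1 \<le> p \<and> p < 2*i - 2 \<and> 2*j - 1 < q \<and> q \<le> 2*i - 2 then insert (i, j) S else S)"
      unfolding S_def using e by auto
    then have "swc (insert e D) p q = swc D p q +
       (if 2*j - 1 \<le> p \<and> p < 2*i - 2 \<and> 2*j - 1 < q \<and> q \<le> 2*i - 2 then 1 else 0)"
      unfolding swc_def S_def[symmetric] using fS nS by simp
    then show ?case using r1 insert.IH[OF RD] by simp
  qed
qed

lemma swc_eq: assumes q: "1 \<le> q"
  shows "swc D p q = card {(a, b) \<in> D. 2*b - 1 \<le> min p (q - 1) \<and> max q (Suc p) \<le> 2*a - 2}"
proof -
  have "{(a, b) \<in> D. 2*b - 1 \<le> p \<and> p < 2*a - 2 \<and> 2*b - 1 < q \<and> q \<le> 2*a - 2}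
      = {(a, b) \<in> D. 2*b - 1 \<le> min p (q - 1) \<and> max q (Suc p) \<le> 2*a - 2}"
    using q by auto
  then show ?thesis unfolding swc_def by simp
qed

lemma swc_dom:
  assumes dom: "\<And>P Q. P < Q \<Longrightarrow> card {(a, b) \<in> D. 2*b - 1 \<le> P \<and> Q \<le> 2*a - 2} \<le> card {(a, b) \<in> D'. 2*b - 1 \<le> P \<and> Q \<le> 2*a - 2}"
  shows "swc D p q \<le> swc D' p q"
proof (cases "q = 0")
  case True then show ?thesis by (simp add: swc_def)
next
  case False
  then have q: "1 \<le> q" by simp
  have "min p (q - 1) < max q (Suc p)" by simp
  then show ?thesis unfolding swc_eq[OF q] by (rule dom)
qed

lemma sigma_permm: assumes R: "rook_placement n D" shows "permm (2*n - 2) (sigmaD D)"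
proof -
  have invol: "sigmaD D (sigmaD D x) = x" for x
  proof (cases "\<exists>(a, b)\<in>D. x = 2*a - 2")
    case True
    then obtain a b where ab: "(a, b) \<in> D" "x = 2*a - 2" by auto
    then show ?thesis using sigma_hi[OF R ab(1)] sigma_lo[OF R ab(1)] by simp
  next
    case F3: False
    show ?thesis
    proof (cases "\<exists>(a, b)\<in>D. x = 2*b - 1")
      case True
      then obtain a b where ab: "(a, b) \<in> D" "x = 2*b - 1" by auto
      then show ?thesis using sigma_hi[OF R ab(1)] sigma_lo[OF R ab(1)] by simp
    next
      case False
      have "sigmaD D x = x" by (rule sigma_fix) (use F3 False in auto)
      then show ?thesis by simp
    qed
  qed
  have "bij (sigmaD D)"
    by (rule o_bij[of "sigmaD D"]) (auto simp: invol)
  moreover have "sigmaD D x = x" if "x < 1 \<or> 2*n - 2 < x" for x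
  proof (rule sigma_fix, safe)
    fix a b assume ab: "(a, b) \<in> D"
    have "1 \<le> b \<and> b < a \<and> a \<le> n" using rook_pos[OF R ab] .
    then show "x = 2*a - 2 \<Longrightarrow> False" "x = 2*b - 1 \<Longrightarrow> False" using that by auto
  qed
  ultimately show ?thesis unfolding permm_def by blast
qed

theorem comb_part:
  assumes R: "rook_placement n D" and R': "rook_placement n D'"
    and dom: "\<And>P Q. P < Q \<Longrightarrow> card {(a, b) \<in> D. 2*b - 1 \<le> P \<and> Q \<le> 2*a - 2} \<le> card {(a, b) \<in> D'. 2*b - 1 \<le> P \<and> Q \<le> 2*a - 2}"
  shows "bruhat_le (2*n - 2) (sigmaD D) (sigmaD D')"
proof (rule bruhat_crit[OF sigma_permm[OF R] sigma_permm[OF R']], intro allI)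
  fix p q
  show "rk (sigmaD D) p q \<le> rk (sigmaD D') p q"
    unfolding rk_sigma[OF R] rk_sigma[OF R'] using swc_dom[OF dom] by simp
qed


lemma polyfun_sum: "finite A \<Longrightarrow> (\<And>a. a \<in> A \<Longrightarrow> (\<lambda>x. F a x) \<in> polyfun) \<Longrightarrow> (\<lambda>x. \<Sum>a\<in>A. F a x) \<in> polyfun"
proof (induction A rule: finite_induct)
  case empty then show ?case using polyfun.const[of 0] by simp
next
  case (insert a A)
  then show ?case using polyfun.add[of "F a" "\<lambda>x. \<Sum>a\<in>A. F a x"] by simp
qed

lemma polyfun_prod: "finite A \<Longrightarrow> (\<And>a. a \<in> A \<Longrightarrow> (\<lambda>x. F a x) \<in> polyfun) \<Longrightarrow> (\<lambda>x. \<Prod>a\<in>A. F a x) \<in> polyfun"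
proof (induction A rule: finite_induct)
  case empty then show ?case using polyfun.const[of 1] by simp
next
  case (insert a A)
  then show ?case using polyfun.mult[of "F a" "\<lambda>x. \<Prod>a\<in>A. F a x"] by simp
qed

lemma polyfun_det:
  assumes "\<And>k l. (\<lambda>x. F k l x) \<in> polyfun"
  shows "(\<lambda>x. det (mat s s (\<lambda>(k, l). F k l x))) \<in> polyfun"
proof -
  have eq: "(\<lambda>x. det (mat s s (\<lambda>(k, l). F k l x))) =
     (\<lambda>x. \<Sum>p\<in>{p. p permutes {0..<s}}. of_int (sign p) * (\<Prod>i\<in>{0..<s}. F i (p i) x))"
  proof
    fix x
    have "det (mat s s (\<lambda>(k, l). F k l x)) =
      (\<Sum>p\<in>{p. p permutes {0..<s}}. signof p * (\<Prod>i = 0..<s. mat s s (\<lambda>(k, l). F k l x) $$ (i, p i)))"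
      by (rule det_def') simp
    also have "\<dots> = (\<Sum>p\<in>{p. p permutes {0..<s}}. of_int (sign p) * (\<Prod>i\<in>{0..<s}. F i (p i) x))"
    proof (rule sum.cong[OF refl])
      fix p assume "p \<in> {p. p permutes {0..<s}}"
      then have "p i < s" if "i < s" for i using permutes_in_image that by fastforce
      then show "signof p * (\<Prod>i = 0..<s. mat s s (\<lambda>(k, l). F k l x) $$ (i, p i)) =
          of_int (sign p) * (\<Prod>i\<in>{0..<s}. F i (p i) x)"
        by (auto intro!: prod.cong)
    qed
    finally show "det (mat s s (\<lambda>(k, l). F k l x)) =
      (\<Sum>p\<in>{p. p permutes {0..<s}}. of_int (sign p) * (\<Prod>i\<in>{0..<s}. F i (p i) x))" .
  qed
  show ?thesis unfolding eq
  proof (rule polyfun_sum)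
    show "finite {p. p permutes {0..<s}}" by (rule finite_permutations) simp
    fix p
    show "(\<lambda>x. of_int (sign p) * (\<Prod>i\<in>{0..<s}. F i (p i) x)) \<in> polyfun"
      by (rule polyfun.mult[OF polyfun.const polyfun_prod]) (use assms in auto)
  qed
qed

lemma det_zero_row:
  assumes "A \<in> carrier_mat s s" "k < s" "\<And>j. j < s \<Longrightarrow> A $$ (k, j) = 0"
  shows "det A = (0::'a::comm_ring_1)"
proof -
  have "det A = (\<Sum>p\<in>{p. p permutes {0..<s}}. signof p * (\<Prod>i = 0..<s. A $$ (i, p i)))"
    by (rule det_def'[OF assms(1)])
  also have "\<dots> = 0"
  proof (rule sum.neutral, intro ballI)
    fix p assume "p \<in> {p. p permutes {0..<s}}"
    then have "p k < s" using permutes_in_image assms(2) by fastforce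
    then have "(\<Prod>i = 0..<s. A $$ (i, p i)) = 0"
      using assms(2,3) by (intro prod_zero) (auto intro!: bexI[of _ k])
    then show "signof p * (\<Prod>i = 0..<s. A $$ (i, p i)) = 0" by simp
  qed
  finally show ?thesis .
qed


lemma sum_single: "finite A \<Longrightarrow> a \<in> A \<Longrightarrow> (\<And>k. k \<in> A \<Longrightarrow> k \<noteq> a \<Longrightarrow> f k = 0) \<Longrightarrow> sum f A = f a"
  using sum.mono_neutral_right[of A "{a}" f] by auto
definition idm :: cmat where "idm = (\<lambda>i j. if i = j then 1 else 0)"
lemma mmul_idm_left: "mmul n idm A i j = (if i \<in> {1..n} then A i j else 0)"
proof -
  have e: "(\<lambda>k. idm i k * A k j) = (\<lambda>k. if k = i then A k j else 0)" by (auto simp: idm_def)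
  show ?thesis unfolding mmul_def e by (simp only: sum.delta finite_atLeastAtMost)
qed
lemma idm_eq: "idm i j = (if i = j then 1 else 0)" by (simp add: idm_def)

lemma idm_inv: "is_inverse n idm idm"
  unfolding is_inverse_def
proof (intro ballI)
  fix i j assume i: "i \<in> {1..n}" and j: "j \<in> {1..n}"
  have "mmul n idm idm i j = idm i j" using mmul_idm_left[of n idm i j] i by simp
  then show "mmul n idm idm i j = (if i = j then 1 else 0) \<and> mmul n idm idm i j = (if i = j then 1 else 0)"
    unfolding idm_eq by simp
qed
lemma idm_borel: "idm \<in> borel n"
  unfolding borel_def mem_Collect_eq
proof (intro conjI allI impI)
  fix i j :: nat assume "1 \<le> j \<and> j < i \<and> i \<le> n"
  then show "idm i j = 0" by (simp add: idm_eq)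
next
  show "\<exists>c. is_inverse n idm c" using idm_inv by blast
qed

lemma is_inverse_someI: assumes "b \<in> borel n" shows "is_inverse n b (minv n b)"
proof -
  obtain c where "is_inverse n b c" using assms unfolding borel_def by blast
  then show ?thesis unfolding minv_def by (rule someI[of "is_inverse n b" c])
qed

lemma posroots_pos: "(i, j) \<in> posroots n \<Longrightarrow> 1 \<le> j \<and> j < i \<and> i \<le> n"
  unfolding posroots_def by auto
lemma fD_orbit: assumes "D \<subseteq> posroots n" shows "fD n D \<in> orbit n D"
proof -
  define c where "c = minv n idm"
  have inv: "is_inverse n idm c" unfolding c_def by (rule is_inverse_someI[OF idm_borel])
  have cI: "c k j = (if k = j then 1 else 0)" if "k \<in> {1..n}" "j \<in> {1..n}" for k j
  proof -
    have "mmul n idm c k j = (if k = j then 1 else 0)" using inv that unfolding is_inverse_def by blast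
    then show ?thesis using mmul_idm_left[of n c k j] that by simp
  qed
  have "bact n idm (fD n D) = fD n D"
  proof (intro ext)
    fix i j
    show "bact n idm (fD n D) i j = fD n D i j"
    proof (cases "1 \<le> j \<and> j < i \<and> i \<le> n")
      case True
      have "mmul n (mmul n idm (fD n D)) c i j = (\<Sum>k = 1..n. fD n D i k * c k j)"
        unfolding mmul_def[of n "mmul n idm (fD n D)"] using True by (simp add: mmul_idm_left)
      also have "\<dots> = (\<Sum>k = 1..n. if k = j then fD n D i k else 0)"
        by (rule sum.cong) (use True cI in auto)
      also have "\<dots> = fD n D i j" using True by simp
      finally have "mmul n (mmul n idm (fD n D)) (minv n idm) i j = fD n D i j" unfolding c_def .
      then show ?thesis unfolding bact_def low_def using True by simp
    next
      case False
      then have "(i, j) \<notin> D" using assms posroots_pos by blast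
      have "low n X i j = 0" for X unfolding low_def using False by auto
      moreover have "fD n D i j = 0" using \<open>(i, j) \<notin> D\<close> by (simp add: fD_def)
      ultimately show ?thesis unfolding bact_def by simp
    qed
  qed
  then show ?thesis unfolding orbit_def using idm_borel by force
qed

lemma borel_inv_upper:
  assumes b: "b \<in> borel n" and inv: "is_inverse n b c"
  shows "1 \<le> l \<Longrightarrow> l < y \<Longrightarrow> y \<le> n \<Longrightarrow> c y l = 0"
proof -
  have bu: "\<And>i j. 1 \<le> j \<Longrightarrow> j < i \<Longrightarrow> i \<le> n \<Longrightarrow> b i j = 0" using b unfolding borel_def by blast
  have cb: "\<And>y l. y \<in> {1..n} \<Longrightarrow> l \<in> {1..n} \<Longrightarrow> mmul n c b y l = (if y = l then 1 else 0)"
    using inv unfolding is_inverse_def by blast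
  have main: "1 \<le> l \<longrightarrow> l \<le> n \<longrightarrow> b l l \<noteq> 0 \<and> (\<forall>y. l < y \<and> y \<le> n \<longrightarrow> c y l = 0)" for l
  proof (induction l rule: less_induct)
    case (less l)
    show ?case
    proof (intro impI)
      assume l: "1 \<le> l" "l \<le> n"
      have red: "mmul n c b y l = c y l * b l l" if y: "l \<le> y" "y \<le> n" for y
      proof -
        have "mmul n c b y l = (\<Sum>k\<in>{1..n}. c y k * b k l)" unfolding mmul_def by simp
        also have "\<dots> = c y l * b l l"
        proof (rule sum_single)
          fix k assume k: "k \<in> {1..n}" "k \<noteq> l"
          show "c y k * b k l = 0"
          proof (cases "k < l")
            case True
            have k1: "1 \<le> k" "k \<le> n" using k by auto
            have "b k k \<noteq> 0 \<and> (\<forall>y. k < y \<and> y \<le> n \<longrightarrow> c y k = 0)"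
              using less.IH[OF True] k1 by blast
            then have "c y k = 0" using True y by auto
            then show ?thesis by simp
          next
            case False
            then have "l < k" using k(2) by simp
            then have "b k l = 0" using bu[of l k] k(1) l(1) by simp
            then show ?thesis by simp
          qed
        next
          show "finite {1..n}" by simp
          show "l \<in> {1..n}" using l by simp
        qed
        finally show ?thesis .
      qed
      have "c l l * b l l = 1" using red[of l] cb[of l l] l by simp
      then have bll: "b l l \<noteq> 0" by auto
      have "c y l = 0" if "l < y" "y \<le> n" for y
      proof -
        have "c y l * b l l = 0" using red[of y] cb[of y l] l that by simp
        then show ?thesis using bll by simp
      qed
      then show "b l l \<noteq> 0 \<and> (\<forall>y. l < y \<and> y \<le> n \<longrightarrow> c y l = 0)" using bll by blast
    qed
  qed
  show "1 \<le> l \<Longrightarrow> l < y \<Longrightarrow> y \<le> n \<Longrightarrow> c y l = 0" using main[of l] by auto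
qed


lemma bact_entry:
  assumes D: "D' \<subseteq> posroots n" and l: "1 \<le> l" "l < a" "a \<le> n"
  shows "bact n b (fD n D') a l = (\<Sum>(t, k)\<in>D'. b a t * minv n b k l)"
proof -
  define c where "c = minv n b"
  have fin: "finite D'" using D posroots_finite finite_subset by blast
  have "bact n b (fD n D') a l = mmul n (mmul n b (fD n D')) c a l"
    unfolding bact_def low_def c_def using l by simp
  also have "\<dots> = (\<Sum>k\<in>{1..n}. \<Sum>t\<in>{1..n}. b a t * fD n D' t k * c k l)"
    unfolding mmul_def by (simp add: sum_distrib_right)
  also have "\<dots> = (\<Sum>t\<in>{1..n}. \<Sum>k\<in>{1..n}. b a t * fD n D' t k * c k l)"
    by (rule sum.swap)
  also have "\<dots> = (\<Sum>(t, k)\<in>{1..n} \<times> {1..n}. b a t * fD n D' t k * c k l)"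
    by (rule sum.cartesian_product)
  also have "\<dots> = (\<Sum>(t, k)\<in>{1..n} \<times> {1..n}. if (t, k) \<in> D' then b a t * c k l else 0)"
    by (rule sum.cong) (auto simp: fD_def)
  also have "\<dots> = (\<Sum>(t, k)\<in>{x \<in> {1..n} \<times> {1..n}. x \<in> D'}. b a t * c k l)"
    by (subst sum.inter_filter) (auto intro!: sum.cong simp: case_prod_unfold)
  also have "{x \<in> {1..n} \<times> {1..n}. x \<in> D'} = D'"
    using D unfolding posroots_def by auto
  finally show ?thesis unfolding c_def .
qed


lemma geom_dom:
  fixes P Q :: nat
  assumes R: "rook_placement n D" and R': "rook_placement n D'"
    and cl: "orbit n D \<subseteq> zariski_closure (orbit n D')" and PQ: "P < Q"
  shows "card {(a, b) \<in> D. 2*b - 1 \<le> P \<and> Q \<le> 2*a - 2} \<le> card {(a, b) \<in> D'. 2*b - 1 \<le> P \<and> Q \<le> 2*a - 2}"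
proof -
  define S where "S = {(a, b) \<in> D. 2*b - 1 \<le> P \<and> Q \<le> 2*a - 2}"
  define E where "E = {(a, b) \<in> D'. 2*b - 1 \<le> P \<and> Q \<le> 2*a - 2}"
  have fD': "finite D'" by (rule rook_finite[OF R'])
  have fE: "finite E" unfolding E_def by (rule finite_subset[OF _ fD']) auto
  have ED': "E \<subseteq> D'" unfolding E_def by auto
  have "card S \<le> card E"
  proof (rule ccontr)
    assume "\<not> card S \<le> card E"
    define r where "r = card E"
    define s where "s = Suc r"
    have "s \<le> card S" using \<open>\<not> card S \<le> card E\<close> unfolding s_def r_def by simp
    then obtain S0 where S0: "S0 \<subseteq> S" "card S0 = s" "finite S0" by (rule obtain_subset_with_card_n)
    obtain g where g: "bij_betw g {0..<s} S0" using ex_bij_betw_nat_finite[OF S0(3)] S0(2) by auto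
    obtain e where e: "bij_betw e {0..<r} E" using ex_bij_betw_nat_finite[OF fE] unfolding r_def by auto
    define ar where "ar = (\<lambda>k. fst (g k))"
    define bc where "bc = (\<lambda>k. snd (g k))"
    have gS: "(ar k, bc k) \<in> D \<and> 2 * bc k - 1 \<le> P \<and> Q \<le> 2 * ar k - 2" if "k < s" for k
    proof -
      have "g k \<in> S" using g S0(1) that unfolding bij_betw_def by auto
      then show ?thesis unfolding S_def ar_def bc_def by (cases "g k") auto
    qed
    have gpos: "1 \<le> bc k \<and> bc k < ar k \<and> ar k \<le> n" if "k < s" for k
      using rook_pos[OF R] gS[OF that] by blast
    have cross: "bc l < ar k" if "k < s" "l < s" for k l
      using gS[OF that(1)] gS[OF that(2)] gpos[OF that(2)] PQ by linarith
    define Pf where "Pf = (\<lambda>x::cmat. det (mat s s (\<lambda>(k, l). x (ar k) (bc l))))"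
    have poly: "Pf \<in> polyfun" unfolding Pf_def by (rule polyfun_det) (rule polyfun.coord)
    have van: "Pf x = 0" if xo: "x \<in> orbit n D'" for x
    proof -
      obtain b where b: "b \<in> borel n" "x = bact n b (fD n D')" using xo unfolding orbit_def by auto
      define c where "c = minv n b"
      have inv: "is_inverse n b c" unfolding c_def by (rule is_inverse_someI[OF b(1)])
      have bu: "\<And>i j. 1 \<le> j \<Longrightarrow> j < i \<Longrightarrow> i \<le> n \<Longrightarrow> b i j = 0" using b(1) unfolding borel_def by blast
      have cu: "\<And>y l. 1 \<le> l \<Longrightarrow> l < y \<Longrightarrow> y \<le> n \<Longrightarrow> c y l = 0" by (rule borel_inv_upper[OF b(1) inv])
      define U where "U = mat s s (\<lambda>(k, i). if i < r then b (ar k) (fst (e i)) else 0)"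
      define V where "V = mat s s (\<lambda>(i, l). if i < r then c (snd (e i)) (bc l) else 0)"
      have entry: "x (ar k) (bc l) = (\<Sum>i\<in>{0..<r}. b (ar k) (fst (e i)) * c (snd (e i)) (bc l))"
        if kl: "k < s" "l < s" for k l
      proof -
        have "x (ar k) (bc l) = (\<Sum>(t, k')\<in>D'. b (ar k) t * c k' (bc l))"
          unfolding b(2) c_def
          by (rule bact_entry) (use R' gpos[OF kl(1)] gpos[OF kl(2)] cross[OF kl] in \<open>auto simp: rook_placement_def\<close>)
        also have "\<dots> = (\<Sum>(t, k')\<in>E. b (ar k) t * c k' (bc l))"
        proof (rule sum.mono_neutral_right[OF fD' ED'], safe)
          fix t k' assume tk: "(t, k') \<in> D'" "(t, k') \<notin> E"
          have p: "1 \<le> k' \<and> k' < t \<and> t \<le> n" using rook_pos[OF R' tk(1)] .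
          have n1: "\<not> (2*k' - 1 \<le> P \<and> Q \<le> 2*t - 2)" using tk unfolding E_def by auto
          show "b (ar k) t * c k' (bc l) = 0"
          proof (cases "2*t - 2 < Q")
            case True
            then have "t < ar k" using gS[OF kl(1)] by linarith
            then have "b (ar k) t = 0" using bu[of t "ar k"] p gpos[OF kl(1)] by simp
            then show ?thesis by simp
          next
            case False
            then have "P < 2*k' - 1" using n1 by linarith
            then have "bc l < k'" using gS[OF kl(2)] by linarith
            then have "c k' (bc l) = 0" using cu[of "bc l" k'] p gpos[OF kl(2)] by simp
            then show ?thesis by simp
          qed
        qed
        also have "\<dots> = (\<Sum>i\<in>{0..<r}. b (ar k) (fst (e i)) * c (snd (e i)) (bc l))"
          using sum.reindex_bij_betw[OF e, of "\<lambda>(t, k'). b (ar k) t * c k' (bc l)"]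
          by (simp add: case_prod_unfold)
        finally show ?thesis .
      qed
      have UV: "mat s s (\<lambda>(k, l). x (ar k) (bc l)) = U * V"
      proof (rule eq_matI)
        fix k l assume "k < dim_row (U * V)" "l < dim_col (U * V)"
        then have kl: "k < s" "l < s" unfolding U_def V_def by auto
        have "(U * V) $$ (k, l) = (\<Sum>i\<in>{0..<s}. U $$ (k, i) * V $$ (i, l))"
          using kl unfolding U_def V_def by (simp add: scalar_prod_def)
        also have "\<dots> = (\<Sum>i\<in>{0..<s}. if i < r then b (ar k) (fst (e i)) * c (snd (e i)) (bc l) else 0)"
          by (rule sum.cong) (use kl in \<open>auto simp: U_def V_def\<close>)
        also have "\<dots> = (\<Sum>i\<in>{0..<r}. b (ar k) (fst (e i)) * c (snd (e i)) (bc l))"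
          unfolding s_def by simp
        finally show "mat s s (\<lambda>(k, l). x (ar k) (bc l)) $$ (k, l) = (U * V) $$ (k, l)"
          using entry[OF kl] kl by simp
      qed (auto simp: U_def V_def)
      have "det V = 0"
        by (rule det_zero_row[of V s r]) (auto simp: V_def s_def)
      then have "det (U * V) = 0"
        using det_mult[of U s V] unfolding U_def V_def by simp
      then show ?thesis unfolding Pf_def UV .
    qed
    have one: "Pf (fD n D) = 1"
    proof -
      have "mat s s (\<lambda>(k, l). fD n D (ar k) (bc l)) = 1\<^sub>m s"
      proof (rule eq_matI)
        fix k l assume "k < dim_row (1\<^sub>m s :: complex mat)" "l < dim_col (1\<^sub>m s :: complex mat)"
        then have kl: "k < s" "l < s" by auto
        have "(ar k, bc l) \<in> D \<longleftrightarrow> k = l"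
        proof
          assume "(ar k, bc l) \<in> D"
          moreover have "(ar k, bc k) \<in> D" "(ar l, bc l) \<in> D" using gS kl by auto
          ultimately have "bc k = bc l" "ar k = ar l"
            using rook_row[OF R] rook_col[OF R] by blast+
          then have "g k = g l" unfolding ar_def bc_def by (simp add: prod_eq_iff)
          then show "k = l" using g kl unfolding bij_betw_def inj_on_def by auto
        next
          assume "k = l" then show "(ar k, bc l) \<in> D" using gS kl by auto
        qed
        then show "mat s s (\<lambda>(k, l). fD n D (ar k) (bc l)) $$ (k, l) = 1\<^sub>m s $$ (k, l)"
          using kl by (simp add: fD_def)
      qed auto
      then show ?thesis unfolding Pf_def by simp
    qed
    have "fD n D \<in> zariski_closure (orbit n D')"
      using cl fD_orbit[of D n] R unfolding rook_placement_def by blast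
    then have "Pf (fD n D) = 0" using poly van unfolding zariski_closure_def by blast
    then show False using one by simp
  qed
  then show ?thesis unfolding S_def E_def .
qed


theorem corollary1p8:
  fixes n :: nat and D D' :: "(nat \<times> nat) set"
  assumes "n \<ge> 2"
    and "rook_placement n D" and "rook_placement n D'"
    and "orbit n D \<subseteq> zariski_closure (orbit n D')"
  shows "bruhat_le (2*n - 2) (sigmaD D) (sigmaD D')"
  by (rule comb_part[OF assms(2) assms(3)]) (rule geom_dom[OF assms(2) assms(3) assms(4)])

end
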